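(* A function $SO:[0,1]^2\to[0,1]$ is a semi-overlap function if and only if there exist two functions $f,g:[0,1]^2\to[0,1]$ such that $$SO(u,v)=\frac{f(u,v)}{f(u,v)+g(u,v)}\quad\text{for all }u,v\in[0,1],$$ and the following conditions hold: (1) $f(u,v)+g(u,v)\neq 0$ for all $u,v\in[0,1]$; (2) $f$ and $g$ are commutative, i.e. $f(u,v)=f(v,u)$ and $g(u,v)=g(v,u)$; (3) if $uv=0$, then $f(u,v)=0$; (4) if $uv=1$, then $g(u,v)=0$; (5) $f$ is increasing and $g$ is decreasing (in each variable); (6) $f$ is left-continuous and $f+g$ is right-continuous.
   Context: A binary function $h$ on $[0,1]^2$ is called left-continuous if for every $u\in[0,1]$ and every nonempty family $\{v_i\mid i\in I\}\subseteq[0,1]$ one has $h(u,\sup_{i\in I} v_i)=\sup_{i\in I} h(u,v_i)$; right-continuity is the analogous notion with limits from the right (infima). A semi-overlap function is a function $SO:[0,1]^2\to[0,1]$ such that for all $u,v\in[0,1]$: (S1) $SO(u,v)=SO(v,u)$; (S2) if $uv=0$ then $SO(u,v)=0$; (S3) if $uv=1$ then $SO(u,v)=1$; (S4) $SO$ is increasing in each variable; (S5) $SO$ is left-continuous. *)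

theory Defs
  imports Complex_Main
begin

text \<open>Functions on [0,1]^2 are modelled as curried real functions; all conditions
are relativised to the unit square.\<close>

definition maps_unit :: "(real \<Rightarrow> real \<Rightarrow> real) \<Rightarrow> bool" where
  "maps_unit h \<longleftrightarrow> (\<forall>u\<in>{0..1}. \<forall>v\<in>{0..1}. h u v \<in> {0..1})"

definition commutative_unit :: "(real \<Rightarrow> real \<Rightarrow> real) \<Rightarrow> bool" where
  "commutative_unit h \<longleftrightarrow> (\<forall>u\<in>{0..1}. \<forall>v\<in>{0..1}. h u v = h v u)"

definition increasing_unit :: "(real \<Rightarrow> real \<Rightarrow> real) \<Rightarrow> bool" where
  "increasing_unit h \<longleftrightarrow>
     (\<forall>u\<in>{0..1}. \<forall>u'\<in>{0..1}. \<forall>v\<in>{0..1}. u \<le> u' \<longrightarrow> h u v \<le> h u' v) \<and>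
     (\<forall>u\<in>{0..1}. \<forall>v\<in>{0..1}. \<forall>v'\<in>{0..1}. v \<le> v' \<longrightarrow> h u v \<le> h u v')"

definition decreasing_unit :: "(real \<Rightarrow> real \<Rightarrow> real) \<Rightarrow> bool" where
  "decreasing_unit h \<longleftrightarrow>
     (\<forall>u\<in>{0..1}. \<forall>u'\<in>{0..1}. \<forall>v\<in>{0..1}. u \<le> u' \<longrightarrow> h u' v \<le> h u v) \<and>
     (\<forall>u\<in>{0..1}. \<forall>v\<in>{0..1}. \<forall>v'\<in>{0..1}. v \<le> v' \<longrightarrow> h u v' \<le> h u v)"

definition left_continuous_unit :: "(real \<Rightarrow> real \<Rightarrow> real) \<Rightarrow> bool" where
  "left_continuous_unit h \<longleftrightarrow>
     (\<forall>u\<in>{0..1}. \<forall>V. V \<noteq> {} \<and> V \<subseteq> {0..1} \<longrightarrow> h u (Sup V) = (SUP v\<in>V. h u v))"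

definition right_continuous_unit :: "(real \<Rightarrow> real \<Rightarrow> real) \<Rightarrow> bool" where
  "right_continuous_unit h \<longleftrightarrow>
     (\<forall>u\<in>{0..1}. \<forall>V. V \<noteq> {} \<and> V \<subseteq> {0..1} \<longrightarrow> h u (Inf V) = (INF v\<in>V. h u v))"

definition semi_overlap :: "(real \<Rightarrow> real \<Rightarrow> real) \<Rightarrow> bool" where
  "semi_overlap SO \<longleftrightarrow>
     maps_unit SO \<and>
     commutative_unit SO \<and>
     (\<forall>u\<in>{0..1}. \<forall>v\<in>{0..1}. u * v = 0 \<longrightarrow> SO u v = 0) \<and>
     (\<forall>u\<in>{0..1}. \<forall>v\<in>{0..1}. u * v = 1 \<longrightarrow> SO u v = 1) \<and>
     increasing_unit SO \<and>
     left_continuous_unit SO"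

end

theory Submission
  imports Defs
begin

lemma back_dir:
  fixes SO f g :: "real \<Rightarrow> real \<Rightarrow> real"
  assumes ms: "maps_unit SO" and mf: "maps_unit f" and mg: "maps_unit g"
   and eq: "\<forall>u\<in>{0..1}. \<forall>v\<in>{0..1}. SO u v = f u v / (f u v + g u v)"
   and nz: "\<forall>u\<in>{0..1}. \<forall>v\<in>{0..1}. f u v + g u v \<noteq> 0"
   and cf: "commutative_unit f" and cg: "commutative_unit g"
   and z: "\<forall>u\<in>{0..1}. \<forall>v\<in>{0..1}. u * v = 0 \<longrightarrow> f u v = 0"
   and o: "\<forall>u\<in>{0..1}. \<forall>v\<in>{0..1}. u * v = 1 \<longrightarrow> g u v = 0"
   and inf: "increasing_unit f" and dg: "decreasing_unit g"
   and lf: "left_continuous_unit f"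
   and rh: "right_continuous_unit (\<lambda>u v. f u v + g u v)"
  shows "semi_overlap SO"
proof -
  have f0: "0 \<le> f u v" "f u v \<le> 1" if "u \<in> {0..1}" "v \<in> {0..1}" for u v
    using mf that unfolding maps_unit_def by auto
  have g0: "0 \<le> g u v" if "u \<in> {0..1}" "v \<in> {0..1}" for u v
    using mg that unfolding maps_unit_def by auto
  have hpos: "0 < f u v + g u v" if "u \<in> {0..1}" "v \<in> {0..1}" for u v
    using f0[OF that] g0[OF that] nz that by force
  have s0: "0 \<le> SO u v" "SO u v \<le> 1" if "u \<in> {0..1}" "v \<in> {0..1}" for u v
    using ms that unfolding maps_unit_def by auto
  have key: "f a b / (f a b + g a b) \<le> f c d / (f c d + g c d)"
    if "a \<in> {0..1}" "b \<in> {0..1}" "c \<in> {0..1}" "d \<in> {0..1}"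
       "f a b \<le> f c d" "g c d \<le> g a b" for a b c d
  proof -
    have p1: "0 < f a b + g a b" and p2: "0 < f c d + g c d" using hpos that by auto
    have "f a b * g c d \<le> f c d * g a b"
      using that f0 g0 by (meson mult_mono)
    hence "f a b * (f c d + g c d) \<le> f c d * (f a b + g a b)"
      by (simp add: algebra_simps)
    thus ?thesis using p1 p2 by (simp add: divide_simps mult.commute)
  qed
  have incSO: "increasing_unit SO"
    unfolding increasing_unit_def
  proof (intro conjI ballI impI)
    fix u u' v :: real assume *: "u \<in> {0..1}" "u' \<in> {0..1}" "v \<in> {0..1}" "u \<le> u'"
    show "SO u v \<le> SO u' v" using eq key[of u v u' v] * inf dg
      unfolding increasing_unit_def decreasing_unit_def by simp
  next
    fix u v v' :: real assume *: "u \<in> {0..1}" "v \<in> {0..1}" "v' \<in> {0..1}" "v \<le> v'"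
    show "SO u v \<le> SO u v'" using eq key[of u v u v'] * inf dg
      unfolding increasing_unit_def decreasing_unit_def by simp
  qed
  have hmono: "f u a + g u a \<le> f u b + g u b"
    if "u \<in> {0..1}" "a \<in> {0..1}" "b \<in> {0..1}" "a \<le> b" for u a b
  proof -
    have "f u (Inf {a, b}) + g u (Inf {a, b}) = (INF v\<in>{a,b}. f u v + g u v)"
      using rh that unfolding right_continuous_unit_def by auto
    moreover have "Inf {a, b} = a" using that by (intro cInf_eq_minimum) auto
    ultimately have "f u a + g u a = Inf {f u a + g u a, f u b + g u b}" by simp
    moreover have "Inf {f u a + g u a, f u b + g u b} \<le> f u b + g u b"
      by (rule cInf_lower) auto
    ultimately show ?thesis by linarith
  qed
  have lSO: "left_continuous_unit SO"
    unfolding left_continuous_unit_def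
  proof (intro ballI allI impI)
    fix u :: real and V :: "real set" assume u: "u \<in> {0..1}" and V: "V \<noteq> {} \<and> V \<subseteq> {0..1}"
    have bV: "bdd_above V" using V by (meson atLeastAtMost_iff bdd_above_def subset_iff)
    have sin: "Sup V \<in> {0..1}" using V bV
      by (metis atLeastAtMost_iff cSup_le_iff cSup_upper dual_order.trans ex_in_conv subsetD)
    have vle: "v \<le> Sup V" if "v \<in> V" for v using cSup_upper[OF that bV] .
    have bS: "bdd_above ((\<lambda>v. SO u v) ` V)"
      using s0 u V by (intro bdd_aboveI[of _ 1]) auto
    define S where "S = (SUP v\<in>V. SO u v)"
    have S0: "0 \<le> S" unfolding S_def using V s0 u bS
      by (metis all_not_in_conv cSUP_upper2 subsetD)
    have fs: "f u (Sup V) = (SUP v\<in>V. f u v)" using lf u V unfolding left_continuous_unit_def by auto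
    have "f u (Sup V) \<le> S * (f u (Sup V) + g u (Sup V))"
    proof -
      have "(SUP v\<in>V. f u v) \<le> S * (f u (Sup V) + g u (Sup V))"
      proof (rule cSUP_least)
        show "V \<noteq> {}" using V by simp
        fix v assume v: "v \<in> V"
        have vi: "v \<in> {0..1}" using v V by auto
        have "f u v = SO u v * (f u v + g u v)" using eq u vi hpos[OF u vi] by simp
        also have "\<dots> \<le> S * (f u v + g u v)"
          using cSUP_upper[OF v bS] hpos[OF u vi] unfolding S_def by simp
        also have "\<dots> \<le> S * (f u (Sup V) + g u (Sup V))"
          using hmono[OF u vi sin vle[OF v]] S0 by (simp add: mult_left_mono)
        finally show "f u v \<le> S * (f u (Sup V) + g u (Sup V))" .
      qed
      thus ?thesis using fs by simp
    qed
    moreover have "SO u (Sup V) = f u (Sup V) / (f u (Sup V) + g u (Sup V))" using eq u sin by blast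
    ultimately have le1: "SO u (Sup V) \<le> S" using hpos[OF u sin] by (metis pos_divide_le_eq)
    have le2: "S \<le> SO u (Sup V)" unfolding S_def
    proof (rule cSUP_least)
      show "V \<noteq> {}" using V by simp
      fix v assume v: "v \<in> V"
      show "SO u v \<le> SO u (Sup V)" using incSO u v V sin vle[OF v]
        unfolding increasing_unit_def by auto
    qed
    show "SO u (Sup V) = (SUP v\<in>V. SO u v)" using le1 le2 S_def by simp
  qed
  have comm: "commutative_unit SO" using eq cf cg unfolding commutative_unit_def by simp
  have zz: "\<forall>u\<in>{0..1}. \<forall>v\<in>{0..1}. u * v = 0 \<longrightarrow> SO u v = 0" using eq z by simp
  have oo: "\<forall>u\<in>{0..1}. \<forall>v\<in>{0..1}. u * v = 1 \<longrightarrow> SO u v = 1" using eq o nz by force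
  show ?thesis unfolding semi_overlap_def using ms comm zz oo incSO lSO by blast
qed

theorem theorem3p6:
  fixes SO :: "real \<Rightarrow> real \<Rightarrow> real"
  assumes "maps_unit SO"
  shows "semi_overlap SO \<longleftrightarrow>
    (\<exists>f g :: real \<Rightarrow> real \<Rightarrow> real.
       maps_unit f \<and> maps_unit g \<and>
       (\<forall>u\<in>{0..1}. \<forall>v\<in>{0..1}. SO u v = f u v / (f u v + g u v)) \<and>
       (\<forall>u\<in>{0..1}. \<forall>v\<in>{0..1}. f u v + g u v \<noteq> 0) \<and>
       commutative_unit f \<and> commutative_unit g \<and>
       (\<forall>u\<in>{0..1}. \<forall>v\<in>{0..1}. u * v = 0 \<longrightarrow> f u v = 0) \<and>
       (\<forall>u\<in>{0..1}. \<forall>v\<in>{0..1}. u * v = 1 \<longrightarrow> g u v = 0) \<and>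
       increasing_unit f \<and> decreasing_unit g \<and>
       left_continuous_unit f \<and>
       right_continuous_unit (\<lambda>u v. f u v + g u v))" (is "?L \<longleftrightarrow> ?R")
proof
  assume so: "semi_overlap SO"
  define g where "g = (\<lambda>u v. 1 - SO u (v::real))"
  have a1: "maps_unit g" using assms unfolding maps_unit_def g_def by auto
  have a2: "commutative_unit g" using so
      unfolding semi_overlap_def commutative_unit_def g_def by auto
  have a3: "decreasing_unit g" using so
      unfolding semi_overlap_def increasing_unit_def decreasing_unit_def g_def by auto
  have "right_continuous_unit (\<lambda>u v. 1)"
      unfolding right_continuous_unit_def by simp
  moreover have "(\<lambda>u v. SO u v + g u v) = (\<lambda>u v. 1)" unfolding g_def by simp
  ultimately have a4: "right_continuous_unit (\<lambda>u v. SO u v + g u v)" by simp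
  have a5: "\<forall>u\<in>{0..1}. \<forall>v\<in>{0..1}. SO u v = SO u v / (SO u v + g u v)"
    "\<forall>u\<in>{0..1}. \<forall>v\<in>{0..1}. SO u v + g u v \<noteq> 0"
    "\<forall>u\<in>{0..1}. \<forall>v\<in>{0..1}. u * v = 1 \<longrightarrow> g u v = 0"
    using so unfolding g_def semi_overlap_def by auto
  show ?R using a1 a2 a3 a4 a5 so assms unfolding semi_overlap_def by blast
next
  assume ?R
  then show "semi_overlap SO" using back_dir[OF assms] by blast
qed

end
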